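(* Let $[x]t$ be a normal planar term (NPT) with $R$-coloring $\pi$. Then exactly one of the following cases holds: (i) $[x]t$ is the identity term ($t=x$) and $|\pi| = |\mathrm{ONH}(\pi)| = 1$; (ii) $[x]t = \mathrm{FO}([x_1]t_1,[x_2]t_2)$ for some NPTs $[x_1]t_1$ and $[x_2]t_2$ with $R$-colorings $\pi_1,\pi_2$ such that $|\pi| = |\pi_1|+|\pi_2|$ and $|\mathrm{ONH}(\pi)| = 1 + |\mathrm{ONH}(\pi_1)| + |\mathrm{ONH}(\pi_2)|$; (iii) $[x]t = \mathrm{VO}_k([x_1]t_1)$ for some NPT $[x_1]t_1$ with $R$-coloring $\pi_1$ and some $1\le k\le |\mathrm{ONH}(\pi_1)|$ such that $|\pi| = 1+|\pi_1|$ and $|\mathrm{ONH}(\pi)| = k+1$.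
   Context: Lambda skeletons: graded sets $\mathrm{SLam}(i)$, least such that $\_ \in \mathrm{SLam}(1)$; $p\in\mathrm{SLam}(j), q\in\mathrm{SLam}(k)\Rightarrow p(q)\in\mathrm{SLam}(j+k)$; $p\in\mathrm{SLam}(i+1)\Rightarrow \lambda\_.p\in\mathrm{SLam}(i)$. A planar lambda term with ordered list of free variables $\Gamma$ decorating $p$, written $[\Gamma]t\in\Lambda_1^0(p)$, is defined by: $[x]x\in\Lambda_1^0(\_)$; from $[\Gamma]t\in\Lambda_1^0(p)$, $[\Delta]u\in\Lambda_1^0(q)$ infer $[\Gamma,\Delta]t(u)\in\Lambda_1^0(p(q))$; from $[x,\Gamma]t\in\Lambda_1^0(p)$ infer $[\Gamma]\lambda x.t\in\Lambda_1^0(\lambda\_.p)$; terms are considered modulo renaming of variables. Colorings: $\mathrm{SNeu}(i)$ (blue) and $\mathrm{SNF}(i)$ (red) are defined by rules (v) $\_\in\mathrm{SNeu}(1)$; (a) $p\in\mathrm{SNeu}(j)$, $q\in\mathrm{SNF}(k)\Rightarrow p(q)\in\mathrm{SNeu}(j+k)$; (s) $p\in\mathrm{SNeu}(i)\Rightarrow p\in\mathrm{SNF}(i)$; ($\ell$) $p\in\mathrm{SNF}(i+1)\Rightarrow\lambda\_.p\in\mathrm{SNF}(i)$. A $B$-coloring (resp. $R$-coloring) of a term is a derivation of its skeleton in $\mathrm{SNeu}$ (resp. $\mathrm{SNF}$); neutral/normal terms are those having one. The size $|\pi|$ of a coloring $\pi$ is the number of uses of rule (s). An NPT is a normal planar term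 $[x]t$ with exactly one free variable. Outer neutral handles: a neutral handle of a term is a decomposition of it as a context with one marked occurrence of a neutral subterm, written $C[\langle n\rangle]$. For a neutral or normal planar term $[\Gamma]t$ with coloring $\pi$, the ordered list $\mathrm{ONH}(\pi)$ is defined by induction: if $\pi$ is rule (v) for $[x]x$, $\mathrm{ONH}(\pi)=(\langle x\rangle)$; if $\pi$ ends with rule (a) deriving $[\Gamma,\Delta]t(u)$ from a $B$-coloring $\pi_1$ of $[\Gamma]t$ and an $R$-coloring $\pi_2$ of $[\Delta]u$, then $\mathrm{ONH}(\pi)$ is $\langle t(u)\rangle$, followed by $t(H)$ for each $H$ in $\mathrm{ONH}(\pi_2)$ in order, followed — only when $\Delta$ is empty — by $H(u)$ for each $H$ in $\mathrm{ONH}(\pi_1)$ in order; if $\pi$ ends with rule (s) applied to $\pi_1$, $\mathrm{ONH}(\pi)=\mathrm{ONH}(\pi_1)$; if $\pi$ ends with rule ($\ell$) deriving $[\Gamma]\lambda x.t$ from $\pi_1$ for $[x,\Gamma]t$, $\mathrm{ONH}(\pi)$ is $\lambda x.H$ for each $H$ in $\mathrm{ONH}(\pi_1)$ in order. $|\mathrm{ONH}(\pi)|$ is its length. Operations: $\mathrm{FO}([x_1]t_1,[x_2]t_2)$ is the NPT $[x_1]t_1'$ where $t_1'$ is obtained from $t_1$ by replacing the unique occurrence of $x_1$ by $x_1(\lambda x_2.t_2)$. For an NPT $[x_1]t_1$ with $R$-coloring $\pi_1$ and $1\le k\le|\mathrm{ONH}(\pi_1)|$, if the $k$-th element of $\mathrm{ONH}(\pi_1)$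 is $t_1 = C[\langle n\rangle]$, then $\mathrm{VO}_k([x_1]t_1)$ is the NPT $[x]\lambda x_1.C[n(x)]$ for a fresh variable $x$. *)

theory Defs
  imports Main
begin

datatype skel = SHole | SApp skel skel | SLam skel

inductive slam :: "skel \<Rightarrow> nat \<Rightarrow> bool" where
  sl_hole: "slam SHole 1"
| sl_app: "slam p j \<Longrightarrow> slam q k \<Longrightarrow> slam (SApp p q) (j + k)"
| sl_lam: "slam p (Suc i) \<Longrightarrow> slam (SLam p) i"

(* Lambda terms modulo renaming: de Bruijn indices.  A free index i (i.e. i >= binder
   depth d) denotes the (i - d)-th variable (0-based) of the ordered context Gamma. *)
datatype dbterm = Var nat | App dbterm dbterm | Lam dbterm

fun dlift :: "nat \<Rightarrow> nat \<Rightarrow> dbterm \<Rightarrow> dbterm" where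
  "dlift k c (Var i) = Var (if i < c then i else i + k)"
| "dlift k c (App t u) = App (dlift k c t) (dlift k c u)"
| "dlift k c (Lam t) = Lam (dlift k (Suc c) t)"

(* planar n t p : [Gamma]t decorates p, with |Gamma| = n.
   [x]x; [Gamma,Delta] t(u) (indices of u shifted past Gamma); [Gamma] \<lambda>x.t from [x,Gamma]t *)
inductive planar :: "nat \<Rightarrow> dbterm \<Rightarrow> skel \<Rightarrow> bool" where
  pl_var: "planar 1 (Var 0) SHole"
| pl_app: "planar j t p \<Longrightarrow> planar k u q \<Longrightarrow> planar (j + k) (App t (dlift j 0 u)) (SApp p q)"
| pl_lam: "planar (Suc i) t p \<Longrightarrow> planar i (Lam t) (SLam p)"

datatype coloring = CV | CA coloring coloring | CS coloring | CL coloring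

inductive sneu :: "coloring \<Rightarrow> skel \<Rightarrow> nat \<Rightarrow> bool"
  and snf :: "coloring \<Rightarrow> skel \<Rightarrow> nat \<Rightarrow> bool" where
  c_v: "sneu CV SHole 1"
| c_a: "sneu \<pi>1 p j \<Longrightarrow> snf \<pi>2 q k \<Longrightarrow> sneu (CA \<pi>1 \<pi>2) (SApp p q) (j + k)"
| c_s: "sneu \<pi> p i \<Longrightarrow> snf (CS \<pi>) p i"
| c_l: "snf \<pi> p (Suc i) \<Longrightarrow> snf (CL \<pi>) (SLam p) i"

definition bcoloring :: "nat \<Rightarrow> dbterm \<Rightarrow> coloring \<Rightarrow> bool" where
  "bcoloring n t \<pi> \<longleftrightarrow> (\<exists>p. planar n t p \<and> sneu \<pi> p n)"

definition rcoloring :: "nat \<Rightarrow> dbterm \<Rightarrow> coloring \<Rightarrow> bool" where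
  "rcoloring n t \<pi> \<longleftrightarrow> (\<exists>p. planar n t p \<and> snf \<pi> p n)"

definition npt :: "dbterm \<Rightarrow> bool" where
  "npt t \<longleftrightarrow> (\<exists>\<pi>. rcoloring 1 t \<pi>)"

fun csize :: "coloring \<Rightarrow> nat" where
  "csize CV = 0"
| "csize (CA a b) = csize a + csize b"
| "csize (CS a) = Suc (csize a)"
| "csize (CL a) = csize a"

(* grade of the skeleton derived by a coloring (= number of free variables) *)
fun cgrade :: "coloring \<Rightarrow> int" where
  "cgrade CV = 1"
| "cgrade (CA a b) = cgrade a + cgrade b"
| "cgrade (CS a) = cgrade a"
| "cgrade (CL a) = cgrade a - 1"

(* handles C[<n>] represented by the path from the root to the marked subterm *)
datatype dir = DL | DR | DB

fun onh :: "coloring \<Rightarrow> dir list list" where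
  "onh CV = [[]]"
| "onh (CA a b) = [] # map ((#) DR) (onh b) @ (if cgrade b = 0 then map ((#) DL) (onh a) else [])"
| "onh (CS a) = onh a"
| "onh (CL a) = map ((#) DB) (onh a)"

(* FO: replace the occurrence of x1 (free index 0) by x1(\<lambda>x2.t2) *)
fun fo_at :: "nat \<Rightarrow> dbterm \<Rightarrow> dbterm \<Rightarrow> dbterm" where
  "fo_at d s (Var i) = (if i = d then App (Var i) (dlift d 0 s) else Var i)"
| "fo_at d s (App t u) = App (fo_at d s t) (fo_at d s u)"
| "fo_at d s (Lam t) = Lam (fo_at (Suc d) s t)"

definition FO :: "dbterm \<Rightarrow> dbterm \<Rightarrow> dbterm" where
  "FO t1 t2 = fo_at 0 (Lam t2) t1"

(* plug d path t: replace the subterm n at path by n(x), where x is the new free variable;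
   d counts the binders of t above the current position; the whole result sits below \<lambda>x1 *)
fun plug :: "nat \<Rightarrow> dir list \<Rightarrow> dbterm \<Rightarrow> dbterm" where
  "plug d [] n = App n (Var (Suc d))"
| "plug d (DL # ps) (App t u) = App (plug d ps t) u"
| "plug d (DR # ps) (App t u) = App t (plug d ps u)"
| "plug d (DB # ps) (Lam t) = Lam (plug (Suc d) ps t)"
| "plug d ps t = t"

(* VO_k([x1]t1) w.r.t. the R-coloring pi1, with k 1-based *)
definition VO :: "nat \<Rightarrow> coloring \<Rightarrow> dbterm \<Rightarrow> dbterm" where
  "VO k \<pi>1 t1 = Lam (plug 0 (onh \<pi>1 ! (k - 1)) t1)"

end

theory Submission
  imports Defs
begin

fun closedn :: "nat \<Rightarrow> dbterm \<Rightarrow> bool" where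
  "closedn n (Var i) = (i < n)"
| "closedn n (App t u) = (closedn n t \<and> closedn n u)"
| "closedn n (Lam t) = closedn (Suc n) t"

fun occ :: "nat \<Rightarrow> dbterm \<Rightarrow> bool" where
  "occ i (Var j) = (j = i)"
| "occ i (App t u) = (occ i t \<or> occ i u)"
| "occ i (Lam t) = occ (Suc i) t"

fun exapp :: "nat \<Rightarrow> dbterm \<Rightarrow> bool" where
  "exapp i (Var j) = False"
| "exapp i (App t u) = (t = Var i \<or> exapp i t \<or> exapp i u)"
| "exapp i (Lam t) = exapp (Suc i) t"

fun gplug :: "nat \<Rightarrow> dir list \<Rightarrow> dbterm \<Rightarrow> dbterm" where
  "gplug m [] n = App n (Var m)"
| "gplug m (DL # ps) (App t u) = App (gplug m ps t) u"
| "gplug m (DR # ps) (App t u) = App t (gplug m ps u)"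
| "gplug m (DB # ps) (Lam t) = Lam (gplug (Suc m) ps t)"
| "gplug m ps t = t"

fun sg :: "skel \<Rightarrow> int" where
  "sg SHole = 1"
| "sg (SApp p q) = sg p + sg q"
| "sg (SLam p) = sg p - 1"

lemma dlift_closed: "closedn n u \<Longrightarrow> n \<le> c \<Longrightarrow> dlift j c u = u"
  by (induction u arbitrary: n c) auto

lemma closedn_dlift: "closedn n u \<Longrightarrow> closedn (n + j) (dlift j c u)"
  by (induction u arbitrary: n c) (auto, metis add_Suc)

lemma closedn_mono: "closedn n u \<Longrightarrow> n \<le> m \<Longrightarrow> closedn m u"
  by (induction u arbitrary: n m) auto

lemma planar_closed: "planar n t p \<Longrightarrow> closedn n t"
proof (induction rule: planar.induct)
  case (pl_app j t p k u q)
  then show ?case using closedn_dlift[of k u j 0] closedn_mono[of j t "j+k"]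
    by (auto simp: add.commute)
qed auto

lemma fo_closed: "closedn n t \<Longrightarrow> n \<le> d \<Longrightarrow> fo_at d s t = t"
  by (induction t arbitrary: n d) auto

lemma dlift_fo: "closedn 0 s \<Longrightarrow> c \<le> d \<Longrightarrow>
   dlift j c (fo_at d s u) = fo_at (d + j) s (dlift j c u)"
  by (induction u arbitrary: c d) (auto simp: dlift_closed)

lemma dlift_gplug: "c \<le> m \<Longrightarrow> dlift j c (gplug m ps t) = gplug (m + j) ps (dlift j c t)"
  by (induction m ps t arbitrary: c rule: gplug.induct) auto

lemma plug_gplug: "plug d ps t = gplug (Suc d) ps t"
  by (induction d ps t rule: plug.induct) auto

lemma planar_sg: "planar n t p \<Longrightarrow> sg p = int n"
  by (induction rule: planar.induct) auto

lemma col_sg: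
  shows "sneu a p n \<Longrightarrow> sg p = int n \<and> cgrade a = int n \<and> 1 \<le> n"
    and "snf b p n \<Longrightarrow> sg p = int n \<and> cgrade b = int n"
  by (induction rule: sneu_snf.inducts) auto

lemma onh_ne: "onh a \<noteq> []"
  by (induction a) auto

lemma onh_neu_hd: "sneu a p n \<Longrightarrow> onh a ! 0 = []"
  by (cases rule: sneu.cases) auto

lemma occ_dlift: "occ i u \<Longrightarrow> c \<le> i \<Longrightarrow> occ (i + j) (dlift j c u)"
  by (induction u arbitrary: i c) (auto, metis Suc_le_mono add_Suc)

lemma planar_occ: "planar n t p \<Longrightarrow> i < n \<Longrightarrow> occ i t"
proof (induction arbitrary: i rule: planar.induct)
  case (pl_app j t p k u q)
  show ?case
  proof (cases "i < j")
    case True then show ?thesis using pl_app by auto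
  next
    case False
    then have "occ (i - j) u" using pl_app by auto
    from occ_dlift[OF this, of 0 j] False show ?thesis by auto
  qed
qed auto

lemma exapp_fo: "occ i t \<Longrightarrow> exapp i (fo_at i s t)"
  by (induction t arbitrary: i) auto

lemma closed_noexapp: "closedn n t \<Longrightarrow> n \<le> i \<Longrightarrow> \<not> exapp i t"
  by (induction t arbitrary: n i) auto

lemma gplug_notvar: "closedn m t \<Longrightarrow> gplug m ps t \<noteq> Var m"
  by (induction m ps t rule: gplug.induct) auto

lemma gplug_noexapp: "closedn m t \<Longrightarrow> \<not> exapp m (gplug m ps t)"
proof (induction m ps t rule: gplug.induct)
  case (1 m n)
  then show ?case using closed_noexapp[of m n m] by auto
next
  case (2 m ps t u)
  then show ?case using closed_noexapp[of m u m] gplug_notvar[of m t ps] by auto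
next
  case (3 m ps t u)
  then show ?case using closed_noexapp[of m t m] by auto
qed (auto dest: closed_noexapp)

definition BARE :: "(coloring \<Rightarrow> skel \<Rightarrow> nat \<Rightarrow> bool) \<Rightarrow> coloring \<Rightarrow> dbterm \<Rightarrow> nat \<Rightarrow> bool" where
  "BARE col a t n = (\<exists>t1 a1 p1 k. planar (n-1) t1 p1 \<and> col a1 p1 (n-1) \<and> 1 \<le> k \<and> k \<le> length (onh a1)
     \<and> t = gplug (n-1) (onh a1 ! (k-1)) t1 \<and> csize a = 1 + csize a1 \<and> length (onh a) = k + 1)"

definition APP :: "(coloring \<Rightarrow> skel \<Rightarrow> nat \<Rightarrow> bool) \<Rightarrow> coloring \<Rightarrow> dbterm \<Rightarrow> nat \<Rightarrow> bool" where
  "APP col a t n = (\<exists>t1 a1 p1 t2 b2. planar n t1 p1 \<and> col a1 p1 n \<and> rcoloring 1 t2 b2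
     \<and> t = fo_at (n-1) (Lam t2) t1 \<and> csize a = csize a1 + csize b2
     \<and> length (onh a) = 1 + length (onh a1) + length (onh b2))"

inductive_cases plH: "planar n t SHole"
inductive_cases plA: "planar n t (SApp p q)"
inductive_cases plL: "planar n t (SLam p)"

lemma L:
  shows "sneu a p n \<Longrightarrow> planar n t p \<Longrightarrow> 1 \<le> n \<Longrightarrow>
           (n = 1 \<and> t = Var 0 \<and> a = CV) \<or> BARE sneu a t n \<or> APP sneu a t n"
    and "snf b p n \<Longrightarrow> planar n t p \<Longrightarrow> 1 \<le> n \<Longrightarrow>
           (n = 1 \<and> t = Var 0 \<and> b = CS CV) \<or> BARE snf b t n \<or> APP snf b t n"
proof (induction arbitrary: t and t rule: sneu_snf.inducts)
  case c_v
  then show ?case by (auto elim: plH)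
next
  case (c_s a p i)
  from c_s.IH[OF c_s.prems] show ?case
  proof (elim disjE)
    assume "BARE sneu a t i"
    then show ?thesis unfolding BARE_def by (metis csize.simps(3) onh.simps(3) plus_1_eq_Suc sneu_snf.c_s)
  next
    assume "APP sneu a t i"
    then show ?thesis unfolding APP_def by (metis add_Suc csize.simps(3) onh.simps(3) sneu_snf.c_s)
  qed auto
next
  case (c_l b p i)
  from c_l.prems(1) obtain t0 where t: "t = Lam t0" and pl: "planar (Suc i) t0 p" by (auto elim: plL)
  have ih: "Suc i = 1 \<and> t0 = Var 0 \<and> b = CS CV \<or> BARE snf b t0 (Suc i) \<or> APP snf b t0 (Suc i)"
    using c_l.IH[OF pl] by simp
  from ih show ?case
  proof (elim disjE)
    assume "BARE snf b t0 (Suc i)"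
    then obtain t1 a1 p1 k where h: "planar i t1 p1" "snf a1 p1 i" "1 \<le> k" "k \<le> length (onh a1)"
      "t0 = gplug i (onh a1 ! (k-1)) t1" "csize b = 1 + csize a1" "length (onh b) = k + 1"
      unfolding BARE_def by auto
    have "planar (i-1) (Lam t1) (SLam p1)" using h c_l.prems(2) by (auto intro: pl_lam)
    moreover have "snf (CL a1) (SLam p1) (i-1)" using h c_l.prems(2) by (auto intro: sneu_snf.c_l)
    moreover have "t = gplug (i-1) (onh (CL a1) ! (k-1)) (Lam t1)"
      using h c_l.prems(2) t by auto
    moreover have "k \<le> length (onh (CL a1))" using h by simp
    ultimately have "BARE snf (CL b) t i" unfolding BARE_def using h
      by - (rule exI[where x="Lam t1"], rule exI[where x="CL a1"], rule exI[where x="SLam p1"], rule exI[where x=k], simp)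
    then show ?thesis by simp
  next
    assume "APP snf b t0 (Suc i)"
    then obtain t1 a1 p1 t2 b2 where h: "planar (Suc i) t1 p1" "snf a1 p1 (Suc i)" "rcoloring 1 t2 b2"
      "t0 = fo_at i (Lam t2) t1" "csize b = csize a1 + csize b2"
      "length (onh b) = 1 + length (onh a1) + length (onh b2)"
      unfolding APP_def by auto
    have "planar i (Lam t1) (SLam p1)" using h by (auto intro: pl_lam)
    moreover have "snf (CL a1) (SLam p1) i" using h by (auto intro: sneu_snf.c_l)
    moreover have "t = fo_at (i-1) (Lam t2) (Lam t1)" using h c_l.prems(2) t by auto
    ultimately show ?thesis unfolding APP_def using h by fastforce
  qed (use c_l.prems(2) in auto)
next
  case (c_a a1 p j a2 q k)
  from c_a.prems(1) obtain ta u j' k' where t: "t = App ta (dlift j' 0 u)"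
    and pa': "planar j' ta p" and pu': "planar k' u q" and jk: "j' + k' = j + k"
    by (auto elim: plA)
  have "j' = j" using planar_sg[OF pa'] col_sg(1)[OF c_a.hyps(1)] by simp
  with jk have jj: "j' = j" and kk: "k' = k" by auto
  note pa = pa'[unfolded jj] and pu = pu'[unfolded kk]
  note t = t[unfolded jj]
  have j1: "1 \<le> j" using col_sg(1)[OF c_a.hyps(1)] by simp
  have cg2: "cgrade a2 = int k" using col_sg(2)[OF c_a.hyps(2)] by simp
  have cta: "closedn j ta" using planar_closed[OF pa] .
  show ?case
  proof (cases "k = 0")
    case True
    have cu: "closedn 0 u" using planar_closed[OF pu] True by simp
    have dl: "dlift m 0 u = u" for m using dlift_closed[OF cu] by simp
    obtain b2 q2 u2 where a2: "a2 = CL b2" and q: "q = SLam q2" and sb2: "snf b2 q2 1"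
      and u: "u = Lam u2" and pu2: "planar 1 u2 q2"
    proof -
      from c_a.hyps(2) True have "snf a2 q 0" by simp
      then show ?thesis
      proof (cases rule: snf.cases)
        case (c_s p')
        then show ?thesis using col_sg(1)[of p' q 0] by simp
      next
        case (c_l b2 q2)
        with pu True obtain u2 where "u = Lam u2" "planar 1 u2 q2" by (auto elim: plL)
        then show ?thesis using that c_l by simp
      qed
    qed
    have cgb2: "cgrade b2 = 1" using col_sg(2)[OF sb2] by simp
    have rc2: "rcoloring 1 u2 b2" unfolding rcoloring_def using pu2 sb2 by auto
    have cu2: "closedn 0 (Lam u2)" using cu u by simp
    from c_a.IH(1)[OF pa j1] show ?thesis
    proof (elim disjE)
      assume X: "j = 1 \<and> ta = Var 0 \<and> a1 = CV"
      have "t = fo_at 0 (Lam u2) (Var 0)" using X t u dl dlift_closed[OF cu2] by simp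
      then have "APP sneu (CA a1 a2) t (j + k)" unfolding APP_def using X True a2 rc2 cgb2
        by - (rule exI[where x="Var 0"], rule exI[where x=CV], rule exI[where x=SHole], rule exI[where x=u2], rule exI[where x=b2], simp add: pl_var[unfolded One_nat_def] c_v[unfolded One_nat_def])
      then show ?thesis by simp
    next
      assume "BARE sneu a1 ta j"
      then obtain ta1 al1 pa1 m where h: "planar (j-1) ta1 pa1" "sneu al1 pa1 (j-1)" "1 \<le> m"
        "m \<le> length (onh al1)" "ta = gplug (j-1) (onh al1 ! (m-1)) ta1"
        "csize a1 = 1 + csize al1" "length (onh a1) = m + 1"
        unfolding BARE_def by auto
      have pl: "planar (j + k - 1) (App ta1 (dlift (j-1) 0 u)) (SApp pa1 q)"
        using pl_app[OF h(1) pu] True by simp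
      have sn: "sneu (CA al1 a2) (SApp pa1 q) (j + k - 1)"
        using sneu_snf.c_a[OF h(2) c_a.hyps(2)] True by simp
      have ix: "onh (CA al1 a2) ! (1 + length (onh a2) + m - 1) = DL # (onh al1 ! (m-1))"
        using h(3,4) cg2 True by (simp add: nth_append)
      have "t = gplug (j + k - 1) (onh (CA al1 a2) ! (1 + length (onh a2) + m - 1)) (App ta1 (dlift (j-1) 0 u))"
        using t h(5) ix True dl by simp
      then have "BARE sneu (CA a1 a2) t (j + k)" unfolding BARE_def using pl sn h cg2 True
        by - (rule exI[where x="App ta1 (dlift (j-1) 0 u)"], rule exI[where x="CA al1 a2"], rule exI[where x="SApp pa1 q"], rule exI[where x="1 + length (onh a2) + m"], simp)
      then show ?thesis by simp
    next
      assume "APP sneu a1 ta j"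
      then obtain ta1 al1 pa1 t2 b2' where h: "planar j ta1 pa1" "sneu al1 pa1 j" "rcoloring 1 t2 b2'"
        "ta = fo_at (j-1) (Lam t2) ta1" "csize a1 = csize al1 + csize b2'"
        "length (onh a1) = 1 + length (onh al1) + length (onh b2')"
        unfolding APP_def by auto
      have pl: "planar (j + k) (App ta1 (dlift j 0 u)) (SApp pa1 q)"
        using pl_app[OF h(1) pu] by simp
      have sn: "sneu (CA al1 a2) (SApp pa1 q) (j + k)"
        using sneu_snf.c_a[OF h(2) c_a.hyps(2)] by simp
      have "t = fo_at (j + k - 1) (Lam t2) (App ta1 (dlift j 0 u))"
        using t h(4) True dl fo_closed[OF cu] by simp
      then have "APP sneu (CA a1 a2) t (j + k)" unfolding APP_def using pl sn h cg2 True
        by - (rule exI[where x="App ta1 (dlift j 0 u)"], rule exI[where x="CA al1 a2"], rule exI[where x="SApp pa1 q"], rule exI[where x=t2], rule exI[where x=b2'], simp)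
      then show ?thesis by simp
    qed
  next
    case False
    then have k1: "1 \<le> k" by simp
    from c_a.IH(2)[OF pu k1] show ?thesis
    proof (elim disjE)
      assume X: "k = 1 \<and> u = Var 0 \<and> a2 = CS CV"
      have "t = gplug j (onh a1 ! 0) ta" using X t onh_neu_hd[OF c_a.hyps(1)] by simp
      then have "BARE sneu (CA a1 a2) t (j + k)" unfolding BARE_def using X pa c_a.hyps(1) onh_ne[of a1]
        by - (rule exI[where x=ta], rule exI[where x=a1], rule exI[where x=p], rule exI[where x=1], simp add: Suc_leI)
      then show ?thesis by simp
    next
      assume "BARE snf a2 u k"
      then obtain u1 b1 q1 m where h: "planar (k-1) u1 q1" "snf b1 q1 (k-1)" "1 \<le> m"
        "m \<le> length (onh b1)" "u = gplug (k-1) (onh b1 ! (m-1)) u1"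
        "csize a2 = 1 + csize b1" "length (onh a2) = m + 1"
        unfolding BARE_def by auto
      have pl: "planar (j + k - 1) (App ta (dlift j 0 u1)) (SApp p q1)"
        using pl_app[OF pa h(1)] k1 by simp
      have sn: "sneu (CA a1 b1) (SApp p q1) (j + k - 1)"
        using sneu_snf.c_a[OF c_a.hyps(1) h(2)] k1 by simp
      have ix: "onh (CA a1 b1) ! (1 + m - 1) = DR # (onh b1 ! (m-1))"
        using h(3,4) by (cases m) (auto simp: nth_append)
      have "t = gplug (j + k - 1) (onh (CA a1 b1) ! (1 + m - 1)) (App ta (dlift j 0 u1))"
        using t h(5) ix k1 dlift_gplug[of 0 "k-1" j "onh b1 ! (m-1)" u1] by (simp add: add.commute)
      then have "BARE sneu (CA a1 a2) t (j + k)" unfolding BARE_def using pl sn h cg2 k1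
        by - (rule exI[where x="App ta (dlift j 0 u1)"], rule exI[where x="CA a1 b1"], rule exI[where x="SApp p q1"], rule exI[where x="1 + m"], simp)
      then show ?thesis by simp
    next
      assume "APP snf a2 u k"
      then obtain u1 b1 q1 t2 b2' where h: "planar k u1 q1" "snf b1 q1 k" "rcoloring 1 t2 b2'"
        "u = fo_at (k-1) (Lam t2) u1" "csize a2 = csize b1 + csize b2'"
        "length (onh a2) = 1 + length (onh b1) + length (onh b2')"
        unfolding APP_def by auto
      have cg1: "cgrade b1 = int k" using col_sg(2)[OF h(2)] by simp
      have cs: "closedn 0 (Lam t2)" using h(3) planar_closed unfolding rcoloring_def by fastforce
      have pl: "planar (j + k) (App ta (dlift j 0 u1)) (SApp p q1)"
        using pl_app[OF pa h(1)] by simp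
      have sn: "sneu (CA a1 b1) (SApp p q1) (j + k)"
        using sneu_snf.c_a[OF c_a.hyps(1) h(2)] by simp
      have "t = fo_at (j + k - 1) (Lam t2) (App ta (dlift j 0 u1))"
        using t h(4) k1 dlift_fo[OF cs, of 0 "k-1" j u1] fo_closed[OF cta, of "j+k-1"]
        by (simp add: add.commute)
      then have "APP sneu (CA a1 a2) t (j + k)" unfolding APP_def using pl sn h cg2 cg1 k1
        by - (rule exI[where x="App ta (dlift j 0 u1)"], rule exI[where x="CA a1 b1"], rule exI[where x="SApp p q1"], rule exI[where x=t2], rule exI[where x=b2'], simp)
      then show ?thesis by simp
    qed
  qed
qed

inductive_cases snf1: "snf b p n"

theorem theorem4p12:
  assumes "rcoloring 1 t \<pi>"
  shows "let A = (t = Var 0 \<and> csize \<pi> = 1 \<and> length (onh \<pi>) = 1);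
             B = (\<exists>t1 \<pi>1 t2 \<pi>2. rcoloring 1 t1 \<pi>1 \<and> rcoloring 1 t2 \<pi>2 \<and> t = FO t1 t2 \<and>
                    csize \<pi> = csize \<pi>1 + csize \<pi>2 \<and>
                    length (onh \<pi>) = 1 + length (onh \<pi>1) + length (onh \<pi>2));
             C = (\<exists>t1 \<pi>1 k. rcoloring 1 t1 \<pi>1 \<and> 1 \<le> k \<and> k \<le> length (onh \<pi>1) \<and>
                    t = VO k \<pi>1 t1 \<and> csize \<pi> = 1 + csize \<pi>1 \<and> length (onh \<pi>) = k + 1)
         in (A \<or> B \<or> C) \<and> \<not> (A \<and> B) \<and> \<not> (A \<and> C) \<and> \<not> (B \<and> C)"
proof -
  define A where "A = (t = Var 0 \<and> csize \<pi> = 1 \<and> length (onh \<pi>) = 1)"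
  define B where "B = (\<exists>t1 \<pi>1 t2 \<pi>2. rcoloring 1 t1 \<pi>1 \<and> rcoloring 1 t2 \<pi>2 \<and> t = FO t1 t2 \<and>
                    csize \<pi> = csize \<pi>1 + csize \<pi>2 \<and>
                    length (onh \<pi>) = 1 + length (onh \<pi>1) + length (onh \<pi>2))"
  define C where "C = (\<exists>t1 \<pi>1 k. rcoloring 1 t1 \<pi>1 \<and> 1 \<le> k \<and> k \<le> length (onh \<pi>1) \<and>
                    t = VO k \<pi>1 t1 \<and> csize \<pi> = 1 + csize \<pi>1 \<and> length (onh \<pi>) = k + 1)"
  from assms obtain p where pl: "planar 1 t p" and sn: "snf \<pi> p 1" unfolding rcoloring_def by auto
  have ABC: "A \<or> B \<or> C"
    using sn
  proof (cases rule: snf.cases)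
    case (c_s a)
    from L(1)[OF c_s(2) pl order_refl] show ?thesis
    proof (elim disjE)
      assume "1 = 1 \<and> t = Var 0 \<and> a = CV"
      then show ?thesis unfolding A_def using c_s by simp
    next
      assume "BARE sneu a t 1"
      then show ?thesis unfolding BARE_def using col_sg(1)[of _ _ 0] by auto
    next
      assume "APP sneu a t 1"
      then obtain t1 a1 p1 t2 b2 where h: "planar 1 t1 p1" "sneu a1 p1 1" "rcoloring 1 t2 b2"
        "t = fo_at 0 (Lam t2) t1" "csize a = csize a1 + csize b2"
        "length (onh a) = 1 + length (onh a1) + length (onh b2)"
        unfolding APP_def by auto
      have "rcoloring 1 t1 (CS a1)" unfolding rcoloring_def using h sneu_snf.c_s by blast
      then have B unfolding B_def FO_def using h c_s
        by - (rule exI[where x=t1], rule exI[where x="CS a1"], rule exI[where x=t2], rule exI[where x=b2], simp)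
      then show ?thesis by simp
    qed
  next
    case (c_l b p0)
    from pl c_l obtain t0 where t: "t = Lam t0" and pl0: "planar 2 t0 p0" by (auto elim!: plL simp: numeral_2_eq_2)
    from L(2)[OF c_l(3)[unfolded one_add_one[symmetric] plus_1_eq_Suc] pl0[unfolded one_add_one[symmetric] plus_1_eq_Suc]]
    have ih: "BARE snf b t0 2 \<or> APP snf b t0 2" by (simp add: numeral_2_eq_2)
    then show ?thesis
    proof
      assume "BARE snf b t0 2"
      then obtain t1 a1 p1 k where h: "planar 1 t1 p1" "snf a1 p1 1" "1 \<le> k" "k \<le> length (onh a1)"
        "t0 = gplug 1 (onh a1 ! (k-1)) t1" "csize b = 1 + csize a1" "length (onh b) = k + 1"
        unfolding BARE_def by auto
      have rc: "rcoloring 1 t1 a1" unfolding rcoloring_def using h by blast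
      have "t = VO k a1 t1" unfolding VO_def using t h(5) by (simp add: plug_gplug)
      then have C unfolding C_def using h c_l rc
        by - (rule exI[where x=t1], rule exI[where x=a1], rule exI[where x=k], simp)
      then show ?thesis by simp
    next
      assume "APP snf b t0 2"
      then obtain t1 a1 p1 t2 b2 where h: "planar 2 t1 p1" "snf a1 p1 2" "rcoloring 1 t2 b2"
        "t0 = fo_at 1 (Lam t2) t1" "csize b = csize a1 + csize b2"
        "length (onh b) = 1 + length (onh a1) + length (onh b2)"
        unfolding APP_def by auto
      have "planar 1 (Lam t1) (SLam p1)" using h(1) pl_lam[of 1] by (simp add: numeral_2_eq_2)
      moreover have "snf (CL a1) (SLam p1) 1" using h(2) sneu_snf.c_l[of a1 p1 1] by (simp add: numeral_2_eq_2)
      ultimately have rc: "rcoloring 1 (Lam t1) (CL a1)" unfolding rcoloring_def by blast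
      have "t = FO (Lam t1) t2" unfolding FO_def using t h(4) by simp
      then have B unfolding B_def using h c_l rc
        by - (rule exI[where x="Lam t1"], rule exI[where x="CL a1"], rule exI[where x=t2], rule exI[where x=b2], simp)
      then show ?thesis by simp
    qed
  qed
  have nAB: "\<not> (A \<and> B)"
  proof
    assume "A \<and> B"
    then obtain t1 t2 where "t = Var 0" "t = fo_at 0 (Lam t2) t1" unfolding A_def B_def FO_def by auto
    then show False by (cases t1) (auto split: if_splits)
  qed
  have nAC: "\<not> (A \<and> C)" unfolding A_def C_def VO_def by auto
  have nBC: "\<not> (B \<and> C)"
  proof
    assume "B \<and> C"
    then obtain t1 p1 t2 t1' k \<pi>1 where B1: "planar 1 t1 p1" "t = fo_at 0 (Lam t2) t1"
      and C1: "rcoloring 1 t1' \<pi>1" "t = Lam (plug 0 (onh \<pi>1 ! (k-1)) t1')"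
      unfolding B_def C_def FO_def VO_def rcoloring_def by blast
    have "exapp 0 t" using B1 exapp_fo planar_occ[OF B1(1), of 0] by simp
    moreover obtain p' where "planar 1 t1' p'" using C1(1) unfolding rcoloring_def by auto
    then have "closedn 1 t1'" by (rule planar_closed)
    then have "\<not> exapp 0 t" using C1(2) gplug_noexapp[of 1 t1'] by (simp add: plug_gplug)
    ultimately show False by simp
  qed
  show ?thesis unfolding Let_def A_def[symmetric] B_def[symmetric] C_def[symmetric]
    using ABC nAB nAC nBC by blast
qed

end
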